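(* For all graphs $G$ and $H$, \[\chi_q(G \,\square\, H) = \max\{\chi_q(G), \chi_q(H)\}.\]
   Context: Graphs are finite, simple and undirected; no vertex is adjacent to itself. The Cartesian product $G \,\square\, H$ has vertex set $V(G)\times V(H)$, with $(u_1,v_1)\sim(u_2,v_2)$ iff ($u_1\sim u_2$ and $v_1=v_2$) or ($u_1=u_2$ and $v_1\sim v_2$). For a graph $H$ and integer $d\ge1$, the measurement graph $M(H,d)$ has as vertices all tuples $\mathbf{E}=(E_v)_{v\in V(H)}$ of orthogonal projectors $E_v\in\mathbb{C}^{d\times d}$ with $\sum_{v\in V(H)}E_v=I$; two vertices $\mathbf{E},\mathbf{E}'$ are adjacent iff $E_vE'_{v'}=0$ for all $v,v'\in V(H)$ with $v\not\sim v'$ (in particular for $v=v'$). A quantum homomorphism from $G$ to $H$ is a graph homomorphism from $G$ to $M(H,d)$ for some $d$. The quantum chromatic number $\chi_q(G)$ is the least $n$ such that there is a quantum homomorphism from $G$ to the complete graph $K_n$. *)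

theory Defs
  imports "Jordan_Normal_Form.Matrix"
begin

type_synonym 'a graph = "'a set \<times> ('a \<Rightarrow> 'a \<Rightarrow> bool)"

definition verts :: "'a graph \<Rightarrow> 'a set" where "verts G = fst G"
definition adj :: "'a graph \<Rightarrow> 'a \<Rightarrow> 'a \<Rightarrow> bool" where "adj G = snd G"

definition is_graph :: "'a graph \<Rightarrow> bool" where
  "is_graph G \<longleftrightarrow> finite (verts G)
     \<and> (\<forall>u v. adj G u v \<longrightarrow> u \<in> verts G \<and> v \<in> verts G)
     \<and> (\<forall>u v. adj G u v \<longrightarrow> adj G v u)
     \<and> (\<forall>u. \<not> adj G u u)"

definition cart_prod :: "'a graph \<Rightarrow> 'b graph \<Rightarrow> ('a \<times> 'b) graph" where
  "cart_prod G H = (verts G \<times> verts H,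
     \<lambda>(u1, v1) (u2, v2). (u1 \<in> verts G \<and> u2 \<in> verts G \<and> v1 \<in> verts H \<and> v2 \<in> verts H) \<and>
        ((adj G u1 u2 \<and> v1 = v2) \<or> (u1 = u2 \<and> adj H v1 v2)))"

definition complete_graph :: "nat \<Rightarrow> nat graph" where
  "complete_graph n = ({0..<n}, \<lambda>i j. i < n \<and> j < n \<and> i \<noteq> j)"

definition orth_proj :: "nat \<Rightarrow> complex mat \<Rightarrow> bool" where
  "orth_proj d P \<longleftrightarrow> P \<in> carrier_mat d d \<and> P * P = P \<and> transpose_mat (map_mat cnj P) = P"

definition mat_sum :: "nat \<Rightarrow> 'v set \<Rightarrow> ('v \<Rightarrow> complex mat) \<Rightarrow> complex mat" where
  "mat_sum d S f = mat d d (\<lambda>(i, j). \<Sum>v\<in>S. f v $$ (i, j))"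

(* vertices of the measurement graph M(H,d): tuples (E_v)_{v \<in> V(H)} of orthogonal
   projectors summing to the identity (entries outside V(H) are irrelevant). *)
definition meas_vertex :: "'b graph \<Rightarrow> nat \<Rightarrow> ('b \<Rightarrow> complex mat) \<Rightarrow> bool" where
  "meas_vertex H d E \<longleftrightarrow> (\<forall>v\<in>verts H. orth_proj d (E v)) \<and> mat_sum d (verts H) E = 1\<^sub>m d"

definition meas_adj :: "'b graph \<Rightarrow> nat \<Rightarrow> ('b \<Rightarrow> complex mat) \<Rightarrow> ('b \<Rightarrow> complex mat) \<Rightarrow> bool" where
  "meas_adj H d E E' \<longleftrightarrow> (\<forall>v\<in>verts H. \<forall>v'\<in>verts H. \<not> adj H v v' \<longrightarrow> E v * E' v' = 0\<^sub>m d d)"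

definition quantum_hom_d :: "'a graph \<Rightarrow> 'b graph \<Rightarrow> nat \<Rightarrow> ('a \<Rightarrow> 'b \<Rightarrow> complex mat) \<Rightarrow> bool" where
  "quantum_hom_d G H d f \<longleftrightarrow>
     (\<forall>u\<in>verts G. meas_vertex H d (f u))
     \<and> (\<forall>u u'. adj G u u' \<longrightarrow> meas_adj H d (f u) (f u'))"

definition quantum_hom :: "'a graph \<Rightarrow> 'b graph \<Rightarrow> bool" where
  "quantum_hom G H \<longleftrightarrow> (\<exists>d\<ge>1. \<exists>f. quantum_hom_d G H d f)"

definition chi_q :: "'a graph \<Rightarrow> nat" where
  "chi_q G = (LEAST n. quantum_hom G (complete_graph n))"

end

theory Submission
  imports Defs
begin



lemma mult_entry:
  assumes "A \<in> carrier_mat n n" "B \<in> carrier_mat n n" "i < n" "j < n"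
  shows "(A * B) $$ (i,j) = (\<Sum>k<n. A $$ (i,k) * B $$ (k,j))"
  using assms by (auto simp: scalar_prod_def lessThan_atLeast0 intro!: sum.cong)

declare index_mult_mat(1)[simp del]

lemma mult_entry'[simp]: "i < dim_row A \<Longrightarrow> j < dim_col B \<Longrightarrow> dim_col A = dim_row B \<Longrightarrow>
  (A*B)$$(i,j) = (\<Sum>k<dim_row B. A$$(i,k)*B$$(k,j))"
  by (auto simp: index_mult_mat scalar_prod_def lessThan_atLeast0 intro!: sum.cong)

lemma mat_sum_carrier[simp]: "mat_sum d S F \<in> carrier_mat d d"
  by (simp add: mat_sum_def)
lemma mat_sum_dims[simp]: "dim_row (mat_sum d S F) = d" "dim_col (mat_sum d S F) = d"
  by (simp_all add: mat_sum_def)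
lemma mat_sum_entry[simp]: "i < d \<Longrightarrow> j < d \<Longrightarrow> mat_sum d S F $$ (i,j) = (\<Sum>s\<in>S. F s $$ (i,j))"
  by (simp add: mat_sum_def)


lemma mat_sum_cong: "(\<And>s. s \<in> S \<Longrightarrow> F s = G s) \<Longrightarrow> mat_sum d S F = mat_sum d S G"
  unfolding mat_sum_def by (intro cong_mat refl) (auto intro!: sum.cong)

lemma mat_sum_left:
  assumes "A \<in> carrier_mat d d" "\<And>s. s\<in>S \<Longrightarrow> F s \<in> carrier_mat d d"
  shows "A * mat_sum d S F = mat_sum d S (\<lambda>s. A * F s)"
proof (rule eq_matI)
  fix i j assume "i < dim_row (mat_sum d S (\<lambda>s. A * F s))" "j < dim_col (mat_sum d S (\<lambda>s. A * F s))"
  hence ij: "i<d" "j<d" by simp_all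
  have "(A * mat_sum d S F) $$ (i,j) = (\<Sum>k<d. A$$(i,k) * (\<Sum>s\<in>S. F s $$(k,j)))"
    using ij assms by simp
  also have "\<dots> = (\<Sum>s\<in>S. \<Sum>k<d. A$$(i,k) * F s $$(k,j))"
    by (simp add: sum_distrib_left) (rule sum.swap)
  also have "\<dots> = mat_sum d S (\<lambda>s. A * F s) $$ (i,j)"
    using ij assms(1) assms(2)[THEN carrier_matD(1)] assms(2)[THEN carrier_matD(2)] by (auto intro!: sum.cong)
  finally show "(A * mat_sum d S F) $$ (i,j) = mat_sum d S (\<lambda>s. A * F s) $$ (i,j)" .
qed (use assms in auto)

lemma mat_sum_right:
  assumes "A \<in> carrier_mat d d" "\<And>s. s\<in>S \<Longrightarrow> F s \<in> carrier_mat d d"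
  shows "mat_sum d S F * A = mat_sum d S (\<lambda>s. F s * A)"
proof (rule eq_matI)
  fix i j assume "i < dim_row (mat_sum d S (\<lambda>s. F s * A))" "j < dim_col (mat_sum d S (\<lambda>s. F s * A))"
  hence ij: "i<d" "j<d" by simp_all
  have "(mat_sum d S F * A) $$ (i,j) = (\<Sum>k<d. (\<Sum>s\<in>S. F s $$(i,k)) * A$$(k,j))"
    using ij assms by simp
  also have "\<dots> = (\<Sum>s\<in>S. \<Sum>k<d. F s $$(i,k) * A$$(k,j))"
    by (simp add: sum_distrib_right) (rule sum.swap)
  also have "\<dots> = mat_sum d S (\<lambda>s. F s * A) $$ (i,j)"
    using ij assms(1) assms(2)[THEN carrier_matD(1)] assms(2)[THEN carrier_matD(2)] by (auto intro!: sum.cong)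
  finally show "(mat_sum d S F * A) $$ (i,j) = mat_sum d S (\<lambda>s. F s * A) $$ (i,j)" .
qed (use assms in auto)

lemma mat_sum_nested:
  "mat_sum d S (\<lambda>s. mat_sum d T (G s)) = mat_sum d (S\<times>T) (\<lambda>(s,t). G s t)"
  by (rule eq_matI) (auto simp: sum.cartesian_product case_prod_beta)

lemma mat_sum_mult:
  assumes "\<And>s. s\<in>S \<Longrightarrow> F s \<in> carrier_mat d d" "\<And>t. t\<in>T \<Longrightarrow> G t \<in> carrier_mat d d"
  shows "mat_sum d S F * mat_sum d T G = mat_sum d (S\<times>T) (\<lambda>(s,t). F s * G t)"
proof -
  have "mat_sum d S F * mat_sum d T G = mat_sum d S (\<lambda>s. F s * mat_sum d T G)"
    by (rule mat_sum_right) (use assms in auto)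
  also have "\<dots> = mat_sum d S (\<lambda>s. mat_sum d T (\<lambda>t. F s * G t))"
    by (rule mat_sum_cong, rule mat_sum_left) (use assms in auto)
  also have "\<dots> = mat_sum d (S\<times>T) (\<lambda>(s,t). F s * G t)"
    by (rule mat_sum_nested)
  finally show ?thesis .
qed

lemma mat_sum_zero: "(\<And>s. s \<in> S \<Longrightarrow> F s = 0\<^sub>m d d) \<Longrightarrow> mat_sum d S F = 0\<^sub>m d d"
  by (rule eq_matI) auto

lemma mat_sum_diag:
  assumes "finite S" "\<And>x y. x\<in>S \<Longrightarrow> y\<in>S \<Longrightarrow> x \<noteq> y \<Longrightarrow> H x y = 0\<^sub>m d d"
    "\<And>x. x\<in>S \<Longrightarrow> H x x \<in> carrier_mat d d"
  shows "mat_sum d (S\<times>S) (\<lambda>(x,y). H x y) = mat_sum d S (\<lambda>x. H x x)"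
proof -
  have "mat_sum d (S\<times>S) (\<lambda>(x,y). H x y) = mat_sum d S (\<lambda>x. mat_sum d S (H x))"
    by (simp add: mat_sum_nested)
  also have "\<dots> = mat_sum d S (\<lambda>x. H x x)"
  proof (rule mat_sum_cong, rule eq_matI)
    fix x i j assume x: "x \<in> S" and ij: "i < dim_row (H x x)" "j < dim_col (H x x)"
    have ij': "i < d" "j < d" using ij assms(3)[OF x] by auto
    have "(\<Sum>y\<in>S. H x y $$ (i,j)) = (\<Sum>y\<in>S. if y = x then H x x $$ (i,j) else 0)"
      using assms(2)[of x] x ij' by (intro sum.cong) auto
    also have "\<dots> = H x x $$ (i,j)" using x assms(1) by (simp add: sum.delta')
    finally show "mat_sum d S (H x) $$ (i, j) = H x x $$ (i, j)" using ij' by simp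
  qed (use assms(3) in auto)
  finally show ?thesis .
qed

definition kron :: "nat \<Rightarrow> nat \<Rightarrow> complex mat \<Rightarrow> complex mat \<Rightarrow> complex mat" where
  "kron d1 d2 A B = mat (d1*d2) (d1*d2) (\<lambda>(i,j). A $$ (i div d2, j div d2) * B $$ (i mod d2, j mod d2))"

lemma kron_carrier[simp]: "kron d1 d2 A B \<in> carrier_mat (d1*d2) (d1*d2)"
  by (simp add: kron_def)
lemma kron_dims[simp]: "dim_row (kron d1 d2 A B) = d1*d2" "dim_col (kron d1 d2 A B) = d1*d2"
  by (simp_all add: kron_def)
lemma kron_entry[simp]: "i < d1*d2 \<Longrightarrow> j < d1*d2 \<Longrightarrow>
   kron d1 d2 A B $$ (i,j) = A $$ (i div d2, j div d2) * B $$ (i mod d2, j mod d2)"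
  by (simp add: kron_def)

lemma divmod_bounds: assumes "(i::nat) < d1*d2" shows "i div d2 < d1" "i mod d2 < d2"
  using assms by (simp_all add: less_mult_imp_div_less) (cases "d2=0"; auto)

lemma divmod_bij: "bij_betw (\<lambda>k. (k div d2, k mod d2)) {..<d1*d2} ({..<d1}\<times>{..<(d2::nat)})"
  unfolding bij_betw_def
proof
  show "inj_on (\<lambda>k. (k div d2, k mod d2)) {..<d1*d2}"
    unfolding inj_on_def by (metis div_mult_mod_eq prod.inject)
  show "(\<lambda>k. (k div d2, k mod d2)) ` {..<d1*d2} = {..<d1}\<times>{..<(d2::nat)}"
  proof
    show "(\<lambda>k. (k div d2, k mod d2)) ` {..<d1*d2} \<subseteq> {..<d1}\<times>{..<(d2::nat)}"
      using divmod_bounds by auto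
    show "{..<d1}\<times>{..<(d2::nat)} \<subseteq> (\<lambda>k. (k div d2, k mod d2)) ` {..<d1*d2}"
    proof
      fix p assume "p \<in> {..<d1}\<times>{..<(d2::nat)}"
      then obtain a b where p: "p = (a,b)" "a < d1" "b < d2" by auto
      have "a*d2 + b < (a+1)*d2" using p by simp
      also have "\<dots> \<le> d1*d2" using p by (intro mult_le_mono1) simp
      finally have "a*d2+b \<in> {..<d1*d2}" by simp
      moreover have "p = ((a*d2+b) div d2, (a*d2+b) mod d2)" using p by simp
      ultimately show "p \<in> (\<lambda>k. (k div d2, k mod d2)) ` {..<d1*d2}" by blast
    qed
  qed
qed

lemma sum_divmod: "(\<Sum>k<d1*d2. h (k div d2) (k mod d2)) = (\<Sum>a<d1. \<Sum>b<(d2::nat). h a b)"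
proof -
  have "(\<Sum>k<d1*d2. h (k div d2) (k mod d2)) = (\<Sum>k<d1*d2. (case_prod h) (k div d2, k mod d2))" by simp
  also have "\<dots> = (\<Sum>p\<in>{..<d1}\<times>{..<d2}. case_prod h p)"
    by (rule sum.reindex_bij_betw[OF divmod_bij])
  also have "\<dots> = (\<Sum>a<d1. \<Sum>b<(d2::nat). h a b)" by (simp add: sum.cartesian_product)
  finally show ?thesis .
qed

lemma kron_mult:
  assumes "A \<in> carrier_mat d1 d1" "A' \<in> carrier_mat d1 d1" "B \<in> carrier_mat d2 d2" "B' \<in> carrier_mat d2 d2"
  shows "kron d1 d2 A B * kron d1 d2 A' B' = kron d1 d2 (A*A') (B*B')"
proof (rule eq_matI)
  fix i j assume "i < dim_row (kron d1 d2 (A*A') (B*B'))" "j < dim_col (kron d1 d2 (A*A') (B*B'))"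
  hence ij: "i < d1*d2" "j < d1*d2" by simp_all
  note b = divmod_bounds[OF ij(1)] divmod_bounds[OF ij(2)]
  have "(kron d1 d2 A B * kron d1 d2 A' B') $$ (i,j) =
     (\<Sum>k<d1*d2. (A $$ (i div d2, k div d2) * B $$ (i mod d2, k mod d2)) * (A' $$ (k div d2, j div d2) * B' $$ (k mod d2, j mod d2)))"
    using ij divmod_bounds by simp
  also have "\<dots> = (\<Sum>a<d1. \<Sum>b<d2. (A $$ (i div d2, a) * B $$ (i mod d2, b)) * (A' $$ (a, j div d2) * B' $$ (b, j mod d2)))"
    by (rule sum_divmod)
  also have "\<dots> = (\<Sum>a<d1. A $$ (i div d2, a) * A' $$ (a, j div d2)) * (\<Sum>b<d2. B $$ (i mod d2, b) * B' $$ (b, j mod d2))"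
    by (simp add: sum_product ac_simps)
  also have "\<dots> = kron d1 d2 (A*A') (B*B') $$ (i,j)"
    using ij b assms by simp
  finally show "(kron d1 d2 A B * kron d1 d2 A' B') $$ (i,j) = kron d1 d2 (A*A') (B*B') $$ (i,j)" .
qed auto

lemma kron_zero_left: "kron d1 d2 (0\<^sub>m d1 d1) B = 0\<^sub>m (d1*d2) (d1*d2)"
  by (rule eq_matI) (auto simp: divmod_bounds)
lemma kron_zero_right: "kron d1 d2 A (0\<^sub>m d2 d2) = 0\<^sub>m (d1*d2) (d1*d2)"
  by (rule eq_matI) (auto simp: divmod_bounds)
lemma kron_one: "kron d1 d2 (1\<^sub>m d1) (1\<^sub>m d2) = 1\<^sub>m (d1*d2)"
proof (rule eq_matI)
  fix i j assume "i < dim_row (1\<^sub>m (d1*d2))" "j < dim_col (1\<^sub>m (d1*d2))"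
  hence ij: "i < d1*d2" "j < d1*d2" by simp_all
  have "(i div d2 = j div d2 \<and> i mod d2 = j mod d2) = (i = j)"
    by (metis div_mult_mod_eq)
  thus "kron d1 d2 (1\<^sub>m d1) (1\<^sub>m d2) $$ (i,j) = 1\<^sub>m (d1*d2) $$ (i,j)"
    using ij divmod_bounds[OF ij(1)] divmod_bounds[OF ij(2)] by auto
qed auto

lemma kron_mat_sum:
  "mat_sum (d1*d2) (S\<times>T) (\<lambda>(a,b). kron d1 d2 (F a) (G b)) = kron d1 d2 (mat_sum d1 S F) (mat_sum d2 T G)"
proof (rule eq_matI)
  fix i j assume "i < dim_row (kron d1 d2 (mat_sum d1 S F) (mat_sum d2 T G))" "j < dim_col (kron d1 d2 (mat_sum d1 S F) (mat_sum d2 T G))"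
  hence ij: "i < d1*d2" "j < d1*d2" by simp_all
  note b = divmod_bounds[OF ij(1)] divmod_bounds[OF ij(2)]
  show "mat_sum (d1*d2) (S\<times>T) (\<lambda>(a,b). kron d1 d2 (F a) (G b)) $$ (i,j) = kron d1 d2 (mat_sum d1 S F) (mat_sum d2 T G) $$ (i,j)"
    using ij b by (simp add: sum_product sum.cartesian_product case_prod_beta)
qed auto



lemma herm_entry: "orth_proj d P \<Longrightarrow> i<d \<Longrightarrow> j<d \<Longrightarrow> P$$(i,j) = cnj (P$$(j,i))"
proof -
  assume o: "orth_proj d P" and ij: "i<d" "j<d"
  hence c: "P \<in> carrier_mat d d" and h: "transpose_mat (map_mat cnj P) = P" by (auto simp: orth_proj_def)
  have "transpose_mat (map_mat cnj P) $$ (i,j) = P $$ (i,j)" using h by simp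
  thus ?thesis using c ij by simp
qed

lemma herm_entry': "orth_proj d P \<Longrightarrow> i<d \<Longrightarrow> j<d \<Longrightarrow> cnj (P$$(j,i)) = P$$(i,j)"
  using herm_entry[of d P j i] by simp

lemma herm_intro: "M \<in> carrier_mat d d \<Longrightarrow> (\<And>i j. i<d \<Longrightarrow> j<d \<Longrightarrow> M$$(i,j) = cnj (M$$(j,i)))
   \<Longrightarrow> transpose_mat (map_mat cnj M) = M"
proof -
  assume c: "M \<in> carrier_mat d d" and h: "\<And>i j. i<d \<Longrightarrow> j<d \<Longrightarrow> M$$(i,j) = cnj (M$$(j,i))"
  show ?thesis
  proof (rule eq_matI)
    fix i j assume ij: "i < dim_row M" "j < dim_col M"
    hence ij': "i < d" "j < d" using c by auto
    have e: "M$$(j,i) = cnj (M$$(i,j))" using h ij' by blast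
    show "transpose_mat (map_mat cnj M) $$ (i,j) = M $$ (i,j)" using ij' c by (simp add: e)
  qed (use c in auto)
qed

definition pfam :: "nat \<Rightarrow> 'x set \<Rightarrow> ('x \<Rightarrow> complex mat) \<Rightarrow> bool" where
  "pfam d A P \<longleftrightarrow> (\<forall>a\<in>A. orth_proj d (P a)) \<and> mat_sum d A P = 1\<^sub>m d"

lemma cz: "cnj z * z = complex_of_real ((cmod z)^2)"
  by (subst complex_norm_square) (simp add: mult.commute)

lemma pfam_orth_aux:
  assumes fin: "finite A" and pf: "pfam d A P" and a: "a \<in> A" and c: "c \<in> A" and ca: "c \<noteq> a"
  shows "P c * P a = 0\<^sub>m d d"
proof -
  have op: "\<And>x. x \<in> A \<Longrightarrow> orth_proj d (P x)" using pf by (auto simp: pfam_def)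
  have car: "\<And>x. x \<in> A \<Longrightarrow> P x \<in> carrier_mat d d" using op by (auto simp: orth_proj_def)
  have idem: "\<And>x. x \<in> A \<Longrightarrow> P x * P x = P x" using op by (auto simp: orth_proj_def)
  have sum1: "mat_sum d A P = 1\<^sub>m d" using pf by (simp add: pfam_def)
  have sumeq: "mat_sum d A (\<lambda>c. P a * P c * P a) = P a"
  proof -
    have "mat_sum d A (\<lambda>c. P a * P c * P a) = mat_sum d A (\<lambda>c. P a * P c) * P a"
      by (rule mat_sum_right[symmetric]) (use car a in \<open>auto intro: mult_carrier_mat\<close>)
    also have "mat_sum d A (\<lambda>c. P a * P c) = P a * mat_sum d A P"
      by (rule mat_sum_left[symmetric]) (use car a in auto)
    finally show ?thesis using sum1 idem[OF a] car[OF a] by simp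
  qed
  define N where "N x = (\<Sum>i<d. \<Sum>k<d. (cmod ((P x * P a) $$ (k,i)))^2)" for x
  define T where "T x = (\<Sum>i<d. (P a * P x * P a) $$ (i,i))" for x
  have TN: "T x = complex_of_real (N x)" if x: "x \<in> A" for x
  proof -
    have e: "P a * P x * P a = (P a * P x) * (P x * P a)"
    proof -
      have "P a * P x * P a = P a * (P x * P x) * P a" using idem[OF x] by simp
      also have "P a * (P x * P x) = P a * P x * P x"
        by (rule assoc_mult_mat[symmetric, OF car[OF a] car[OF x] car[OF x]])
      also have "P a * P x * P x * P a = (P a * P x) * (P x * P a)"
        using car[OF a] car[OF x] by (intro assoc_mult_mat) auto
      finally show ?thesis .
    qed
    have "(P a * P x * P a) $$ (i,i) = (\<Sum>k<d. cnj ((P x * P a) $$ (k,i)) * (P x * P a) $$ (k,i))"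
      if i: "i < d" for i
    proof -
      have "(P a * P x * P a) $$ (i,i) = (\<Sum>k<d. (P a * P x) $$ (i,k) * (P x * P a) $$ (k,i))"
        unfolding e using car[OF a] car[OF x] i by simp
      also have "\<dots> = (\<Sum>k<d. cnj ((P x * P a) $$ (k,i)) * (P x * P a) $$ (k,i))"
      proof (rule sum.cong[OF refl])
        fix k assume "k \<in> {..<d}" hence k: "k < d" by simp
        have "(P a * P x) $$ (i,k) = (\<Sum>l<d. P a $$ (i,l) * P x $$ (l,k))"
          using car[OF a] car[OF x] i k by simp
        also have "\<dots> = (\<Sum>l<d. cnj (P x $$ (k,l) * P a $$ (l,i)))"
          using herm_entry'[OF op[OF a]] herm_entry'[OF op[OF x]] i k
          by (intro sum.cong refl) (simp add: mult.commute)
        also have "\<dots> = cnj ((P x * P a) $$ (k,i))"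
          using car[OF a] car[OF x] i k by (simp add: cnj_sum)
        finally show "(P a * P x) $$ (i,k) * (P x * P a) $$ (k,i) = cnj ((P x * P a) $$ (k,i)) * (P x * P a) $$ (k,i)"
          by simp
      qed
      finally show ?thesis .
    qed
    hence "T x = (\<Sum>i<d. \<Sum>k<d. cnj ((P x * P a) $$ (k,i)) * (P x * P a) $$ (k,i))"
      unfolding T_def by (intro sum.cong) auto
    also have "\<dots> = complex_of_real (N x)"
      unfolding N_def by (simp add: cz)
    finally show ?thesis .
  qed
  have "(\<Sum>x\<in>A. T x) = (\<Sum>i<d. \<Sum>x\<in>A. (P a * P x * P a) $$ (i,i))"
    unfolding T_def by (rule sum.swap)
  also have "\<dots> = (\<Sum>i<d. P a $$ (i,i))"
  proof (rule sum.cong[OF refl])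
    fix i assume "i \<in> {..<d}"
    hence "i < d" by simp
    hence "mat_sum d A (\<lambda>c. P a * P c * P a) $$ (i,i) = P a $$ (i,i)" using sumeq by simp
    thus "(\<Sum>x\<in>A. (P a * P x * P a) $$ (i,i)) = P a $$ (i,i)" using \<open>i<d\<close> by simp
  qed
  also have "\<dots> = T a" unfolding T_def using idem[OF a] by simp
  finally have fT: "(\<Sum>x\<in>A. T x) = T a" .
  have e1: "(\<Sum>x\<in>A. T x) = (\<Sum>x\<in>A. complex_of_real (N x))" by (rule sum.cong[OF refl TN])
  have "complex_of_real (\<Sum>x\<in>A. N x) = (\<Sum>x\<in>A. T x)" unfolding e1 by (rule of_real_sum)
  also have "\<dots> = T a" by (rule fT)
  also have "\<dots> = complex_of_real (N a)" by (rule TN[OF a])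
  finally have "complex_of_real (\<Sum>x\<in>A. N x) = complex_of_real (N a)" .
  hence "(\<Sum>x\<in>A. N x) = N a" by (simp only: of_real_eq_iff)
  hence s0: "(\<Sum>x\<in>A-{a}. N x) = 0" using fin a by (simp add: sum.remove)
  have Nnn: "\<And>x. N x \<ge> 0" unfolding N_def by (intro sum_nonneg) auto
  have "\<forall>x\<in>A-{a}. N x = 0" using sum_nonneg_eq_0_iff[of "A-{a}" N] fin Nnn s0 by blast
  hence Nc: "N c = 0" using c ca by blast
  have inn: "\<And>i. (\<Sum>k<d. (cmod ((P c * P a) $$ (k,i)))^2) \<ge> 0" by (intro sum_nonneg) simp
  have "\<forall>i\<in>{..<d}. (\<Sum>k<d. (cmod ((P c * P a) $$ (k,i)))^2) = 0"
    using sum_nonneg_eq_0_iff[of "{..<d}" "\<lambda>i. (\<Sum>k<d. (cmod ((P c * P a) $$ (k,i)))^2)"] inn Nc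
    unfolding N_def by blast
  have z: "(P c * P a) $$ (k,i) = 0" if ki: "k < d" "i < d" for k i
  proof -
    have "(\<Sum>k<d. (cmod ((P c * P a) $$ (k,i)))^2) = 0" using ki \<open>\<forall>i\<in>{..<d}. _\<close> by blast
    hence "\<forall>k\<in>{..<d}. (cmod ((P c * P a) $$ (k,i)))^2 = 0"
      using sum_nonneg_eq_0_iff[of "{..<d}" "\<lambda>k. (cmod ((P c * P a) $$ (k,i)))^2"] by simp
    thus ?thesis using ki by simp
  qed
  show ?thesis
  proof (rule eq_matI)
    fix i j assume "i < dim_row (0\<^sub>m d d)" "j < dim_col (0\<^sub>m d d)"
    thus "(P c * P a) $$ (i,j) = 0\<^sub>m d d $$ (i,j)" using z by simp
  qed (use car[OF a] car[OF c] in simp_all)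
qed

lemma pfam_orth:
  assumes "finite A" "pfam d A P" "a \<in> A" "b \<in> A" "a \<noteq> b"
  shows "P a * P b = 0\<^sub>m d d"
  using pfam_orth_aux[OF assms(1,2,4,3)] assms(5) by simp



lemma mod_inj: assumes h: "(a + b) mod k = (a' + b) mod (k::nat)" and "a < k" "a' < k" shows "a = a'"
proof -
  have "int ((a + b) mod k) = int ((a' + b) mod k)" using h by simp
  hence "(int a + int b) mod int k = (int a' + int b) mod int k" by (simp add: of_nat_mod)
  hence "((int a + int b) + (- int b)) mod int k = ((int a' + int b) + (- int b)) mod int k" by (rule mod_add_cong) simp
  hence "int a mod int k = int a' mod int k" by simp
  hence "int (a mod k) = int (a' mod k)" by (simp add: of_nat_mod)
  thus ?thesis using assms by simp
qed


lemma if_entry: "(if b then A else B) $$ ij = (if b then A $$ ij else B $$ ij)" by simp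
lemma cnj_if: "cnj (if b then x else y) = (if b then cnj x else cnj y)" by simp

definition pcomb :: "nat \<Rightarrow> nat \<Rightarrow> nat \<Rightarrow> nat \<Rightarrow> nat \<Rightarrow> (nat \<Rightarrow> complex mat) \<Rightarrow> (nat \<Rightarrow> complex mat) \<Rightarrow> nat \<Rightarrow> complex mat" where
  "pcomb d1 d2 n m k P Q c = mat_sum (d1*d2) ({0..<n}\<times>{0..<m})
     (\<lambda>x. if (fst x + snd x) mod k = c then kron d1 d2 (P (fst x)) (Q (snd x)) else 0\<^sub>m (d1*d2) (d1*d2))"

lemma pcomb_carrier[simp]: "pcomb d1 d2 n m k P Q c \<in> carrier_mat (d1*d2) (d1*d2)"
  by (simp add: pcomb_def)

lemma pcomb_mult:
  assumes P: "\<And>a. a<n \<Longrightarrow> P a \<in> carrier_mat d1 d1" and P': "\<And>a. a<n \<Longrightarrow> P' a \<in> carrier_mat d1 d1"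
    and Q: "\<And>b. b<m \<Longrightarrow> Q b \<in> carrier_mat d2 d2" and Q': "\<And>b. b<m \<Longrightarrow> Q' b \<in> carrier_mat d2 d2"
  shows "pcomb d1 d2 n m k P Q c * pcomb d1 d2 n m k P' Q' c' =
    mat_sum (d1*d2) (({0..<n}\<times>{0..<m}) \<times> ({0..<n}\<times>{0..<m})) (\<lambda>(x,y).
      if (fst x + snd x) mod k = c \<and> (fst y + snd y) mod k = c'
      then kron d1 d2 (P (fst x) * P' (fst y)) (Q (snd x) * Q' (snd y)) else 0\<^sub>m (d1*d2) (d1*d2))"
  unfolding pcomb_def
  apply (subst mat_sum_mult)
    apply simp
   apply simp
  apply (rule mat_sum_cong)
  using P P' Q Q' by (auto simp: kron_mult)

lemma pcomb_pfam:
  assumes pP: "pfam d1 {0..<n} P" and pQ: "pfam d2 {0..<m} Q" and k: "n \<le> k" "m \<le> k" "0 < k"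
  shows "pfam (d1*d2) {0..<k} (pcomb d1 d2 n m k P Q)"
proof -
  have Pop: "\<And>a. a<n \<Longrightarrow> orth_proj d1 (P a)" using pP by (auto simp: pfam_def)
  have Qop: "\<And>a. a<m \<Longrightarrow> orth_proj d2 (Q a)" using pQ by (auto simp: pfam_def)
  have Pc: "\<And>a. a<n \<Longrightarrow> P a \<in> carrier_mat d1 d1" using Pop by (auto simp: orth_proj_def)
  have Qc: "\<And>a. a<m \<Longrightarrow> Q a \<in> carrier_mat d2 d2" using Qop by (auto simp: orth_proj_def)
  have Pi: "\<And>a. a<n \<Longrightarrow> P a * P a = P a" using Pop by (auto simp: orth_proj_def)
  have Qi: "\<And>a. a<m \<Longrightarrow> Q a * Q a = Q a" using Qop by (auto simp: orth_proj_def)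
  have Po: "\<And>a a'. a<n \<Longrightarrow> a'<n \<Longrightarrow> a \<noteq> a' \<Longrightarrow> P a * P a' = 0\<^sub>m d1 d1"
    using pfam_orth[OF _ pP] by auto
  have Qo: "\<And>a a'. a<m \<Longrightarrow> a'<m \<Longrightarrow> a \<noteq> a' \<Longrightarrow> Q a * Q a' = 0\<^sub>m d2 d2"
    using pfam_orth[OF _ pQ] by auto
  define X where "X = {0..<n}\<times>{0..<m}"
  have op: "orth_proj (d1*d2) (pcomb d1 d2 n m k P Q c)" for c
  proof -
    have "pcomb d1 d2 n m k P Q c * pcomb d1 d2 n m k P Q c =
      mat_sum (d1*d2) (X \<times> X) (\<lambda>(x,y).
      if (fst x + snd x) mod k = c \<and> (fst y + snd y) mod k = c
      then kron d1 d2 (P (fst x) * P (fst y)) (Q (snd x) * Q (snd y)) else 0\<^sub>m (d1*d2) (d1*d2))"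
      unfolding X_def by (rule pcomb_mult) (use Pc Qc in auto)
    also have "\<dots> = mat_sum (d1*d2) X (\<lambda>x.
      if (fst x + snd x) mod k = c \<and> (fst x + snd x) mod k = c
      then kron d1 d2 (P (fst x) * P (fst x)) (Q (snd x) * Q (snd x)) else 0\<^sub>m (d1*d2) (d1*d2))"
    proof (rule mat_sum_diag)
      show "finite X" unfolding X_def by simp
      fix x y assume xy: "x \<in> X" "y \<in> X" "x \<noteq> y"
      obtain a b a' b' where ab0: "x = (a,b)" "y = (a',b')" by (cases x, cases y) auto
      hence ab: "x = (a,b)" "y = (a',b')" "a<n" "b<m" "a'<n" "b'<m" using xy unfolding X_def by auto
      show "(if (fst x + snd x) mod k = c \<and> (fst y + snd y) mod k = c
        then kron d1 d2 (P (fst x) * P (fst y)) (Q (snd x) * Q (snd y)) else 0\<^sub>m (d1*d2) (d1*d2)) = 0\<^sub>m (d1*d2) (d1*d2)"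
        using ab xy Po Qo by (cases "a = a'") (auto simp: kron_zero_left kron_zero_right)
    qed simp
    also have "\<dots> = pcomb d1 d2 n m k P Q c"
      unfolding pcomb_def X_def by (rule mat_sum_cong) (auto simp: Pi Qi)
    finally have idem: "pcomb d1 d2 n m k P Q c * pcomb d1 d2 n m k P Q c = pcomb d1 d2 n m k P Q c" .
    have herm: "transpose_mat (map_mat cnj (pcomb d1 d2 n m k P Q c)) = pcomb d1 d2 n m k P Q c"
    proof (rule herm_intro[OF pcomb_carrier])
      fix i j assume ij: "i < d1*d2" "j < d1*d2"
      note b = divmod_bounds[OF ij(1)] divmod_bounds[OF ij(2)]
      show "pcomb d1 d2 n m k P Q c $$ (i,j) = cnj (pcomb d1 d2 n m k P Q c $$ (j,i))"
        unfolding pcomb_def using ij b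
        by (auto simp: cnj_sum if_entry cnj_if herm_entry'[OF Pop] herm_entry'[OF Qop] intro!: sum.cong)
    qed
    show ?thesis using idem herm by (simp add: orth_proj_def)
  qed
  have "mat_sum (d1*d2) {0..<k} (pcomb d1 d2 n m k P Q) = mat_sum (d1*d2) X (\<lambda>(a,b). kron d1 d2 (P a) (Q b))"
  proof (rule eq_matI)
    fix i j assume "i < dim_row (mat_sum (d1*d2) X (\<lambda>(a,b). kron d1 d2 (P a) (Q b)))"
      "j < dim_col (mat_sum (d1*d2) X (\<lambda>(a,b). kron d1 d2 (P a) (Q b)))"
    hence ij: "i < d1*d2" "j < d1*d2" by simp_all
    have "mat_sum (d1*d2) {0..<k} (pcomb d1 d2 n m k P Q) $$ (i,j) =
      (\<Sum>c\<in>{0..<k}. \<Sum>x\<in>X. if (fst x + snd x) mod k = c then kron d1 d2 (P (fst x)) (Q (snd x)) $$ (i,j) else 0)"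
      using ij unfolding pcomb_def X_def by (auto simp: if_entry intro!: sum.cong)
    also have "\<dots> = (\<Sum>x\<in>X. \<Sum>c\<in>{0..<k}. if (fst x + snd x) mod k = c then kron d1 d2 (P (fst x)) (Q (snd x)) $$ (i,j) else 0)"
      by (rule sum.swap)
    also have "\<dots> = (\<Sum>x\<in>X. kron d1 d2 (P (fst x)) (Q (snd x)) $$ (i,j))"
      using k(3) by (intro sum.cong refl) (simp add: sum.delta')
    also have "\<dots> = mat_sum (d1*d2) X (\<lambda>(a,b). kron d1 d2 (P a) (Q b)) $$ (i,j)"
      using ij by (simp add: case_prod_beta)
    finally show "mat_sum (d1*d2) {0..<k} (pcomb d1 d2 n m k P Q) $$ (i,j) = mat_sum (d1*d2) X (\<lambda>(a,b). kron d1 d2 (P a) (Q b)) $$ (i,j)" .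
  qed simp_all
  also have "\<dots> = kron d1 d2 (mat_sum d1 {0..<n} P) (mat_sum d2 {0..<m} Q)"
    unfolding X_def by (rule kron_mat_sum)
  also have "\<dots> = 1\<^sub>m (d1*d2)" using pP pQ by (simp add: pfam_def kron_one)
  finally show ?thesis using op by (simp add: pfam_def)
qed

lemma pcomb_orth_G:
  assumes pP: "pfam d1 {0..<n} P" and pP': "pfam d1 {0..<n} P'" and pQ: "pfam d2 {0..<m} Q"
    and orth: "\<And>a. a<n \<Longrightarrow> P a * P' a = 0\<^sub>m d1 d1" and k: "n \<le> k"
  shows "pcomb d1 d2 n m k P Q c * pcomb d1 d2 n m k P' Q c = 0\<^sub>m (d1*d2) (d1*d2)"
proof -
  have Pc: "\<And>a. a<n \<Longrightarrow> P a \<in> carrier_mat d1 d1" using pP by (auto simp: pfam_def orth_proj_def)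
  have Pc': "\<And>a. a<n \<Longrightarrow> P' a \<in> carrier_mat d1 d1" using pP' by (auto simp: pfam_def orth_proj_def)
  have Qc: "\<And>a. a<m \<Longrightarrow> Q a \<in> carrier_mat d2 d2" using pQ by (auto simp: pfam_def orth_proj_def)
  have Qo: "\<And>a a'. a<m \<Longrightarrow> a'<m \<Longrightarrow> a \<noteq> a' \<Longrightarrow> Q a * Q a' = 0\<^sub>m d2 d2"
    using pfam_orth[OF _ pQ] by auto
  have eq: "pcomb d1 d2 n m k P Q c * pcomb d1 d2 n m k P' Q c =
    mat_sum (d1*d2) (({0..<n}\<times>{0..<m}) \<times> ({0..<n}\<times>{0..<m})) (\<lambda>(x,y).
      if (fst x + snd x) mod k = c \<and> (fst y + snd y) mod k = c
      then kron d1 d2 (P (fst x) * P' (fst y)) (Q (snd x) * Q (snd y)) else 0\<^sub>m (d1*d2) (d1*d2))"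
    by (rule pcomb_mult) (use Pc Pc' Qc in auto)
  show ?thesis
    unfolding eq
  proof (rule mat_sum_zero)
    fix p assume p: "p \<in> ({0..<n}\<times>{0..<m}) \<times> ({0..<n}\<times>{0..<m})"
    obtain a b a' b' where "p = ((a,b),(a',b'))" by (cases p) auto
    hence ab: "p = ((a,b),(a',b'))" "a<n" "b<m" "a'<n" "b'<m" using p by auto
    show "(case p of (x,y) \<Rightarrow> if (fst x + snd x) mod k = c \<and> (fst y + snd y) mod k = c
      then kron d1 d2 (P (fst x) * P' (fst y)) (Q (snd x) * Q (snd y)) else 0\<^sub>m (d1*d2) (d1*d2)) = 0\<^sub>m (d1*d2) (d1*d2)"
    proof (cases "b = b'")
      case True
      show ?thesis
      proof (cases "(a + b) mod k = c \<and> (a' + b') mod k = c")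
        case True2: True
        hence "a = a'" using mod_inj[of a b k a'] \<open>b = b'\<close> ab k by auto
        thus ?thesis using ab orth by (auto simp: kron_zero_left)
      qed (use ab in auto)
    next
      case False
      thus ?thesis using ab Qo by (auto simp: kron_zero_right)
    qed
  qed
qed

lemma pcomb_orth_H:
  assumes pP: "pfam d1 {0..<n} P" and pQ: "pfam d2 {0..<m} Q" and pQ': "pfam d2 {0..<m} Q'"
    and orth: "\<And>b. b<m \<Longrightarrow> Q b * Q' b = 0\<^sub>m d2 d2" and k: "m \<le> k"
  shows "pcomb d1 d2 n m k P Q c * pcomb d1 d2 n m k P Q' c = 0\<^sub>m (d1*d2) (d1*d2)"
proof -
  have Pc: "\<And>a. a<n \<Longrightarrow> P a \<in> carrier_mat d1 d1" using pP by (auto simp: pfam_def orth_proj_def)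
  have Qc': "\<And>a. a<m \<Longrightarrow> Q' a \<in> carrier_mat d2 d2" using pQ' by (auto simp: pfam_def orth_proj_def)
  have Qc: "\<And>a. a<m \<Longrightarrow> Q a \<in> carrier_mat d2 d2" using pQ by (auto simp: pfam_def orth_proj_def)
  have Po: "\<And>a a'. a<n \<Longrightarrow> a'<n \<Longrightarrow> a \<noteq> a' \<Longrightarrow> P a * P a' = 0\<^sub>m d1 d1"
    using pfam_orth[OF _ pP] by auto
  have eq: "pcomb d1 d2 n m k P Q c * pcomb d1 d2 n m k P Q' c =
    mat_sum (d1*d2) (({0..<n}\<times>{0..<m}) \<times> ({0..<n}\<times>{0..<m})) (\<lambda>(x,y).
      if (fst x + snd x) mod k = c \<and> (fst y + snd y) mod k = c
      then kron d1 d2 (P (fst x) * P (fst y)) (Q (snd x) * Q' (snd y)) else 0\<^sub>m (d1*d2) (d1*d2))"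
    by (rule pcomb_mult) (use Pc Qc Qc' in auto)
  show ?thesis
    unfolding eq
  proof (rule mat_sum_zero)
    fix p assume p: "p \<in> ({0..<n}\<times>{0..<m}) \<times> ({0..<n}\<times>{0..<m})"
    obtain a b a' b' where "p = ((a,b),(a',b'))" by (cases p) auto
    hence ab: "p = ((a,b),(a',b'))" "a<n" "b<m" "a'<n" "b'<m" using p by auto
    show "(case p of (x,y) \<Rightarrow> if (fst x + snd x) mod k = c \<and> (fst y + snd y) mod k = c
      then kron d1 d2 (P (fst x) * P (fst y)) (Q (snd x) * Q' (snd y)) else 0\<^sub>m (d1*d2) (d1*d2)) = 0\<^sub>m (d1*d2) (d1*d2)"
    proof (cases "a = a'")
      case True
      show ?thesis
      proof (cases "(a + b) mod k = c \<and> (a' + b') mod k = c")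
        case True2: True
        hence "b = b'" using mod_inj[of b a k b'] \<open>a = a'\<close> ab k by (auto simp: add.commute)
        thus ?thesis using ab orth by (auto simp: kron_zero_right)
      qed (use ab in auto)
    next
      case False
      thus ?thesis using ab Po by (auto simp: kron_zero_left)
    qed
  qed
qed



lemma verts_K[simp]: "verts (complete_graph n) = {0..<n}"
  by (simp add: verts_def complete_graph_def)
lemma adj_K[simp]: "adj (complete_graph n) a b = (a < n \<and> b < n \<and> a \<noteq> b)"
  by (simp add: adj_def complete_graph_def)
lemma verts_cart[simp]: "verts (cart_prod G H) = verts G \<times> verts H"
  by (simp add: verts_def cart_prod_def)
lemma adj_cart: "adj (cart_prod G H) (u1,v1) (u2,v2) = ((u1 \<in> verts G \<and> u2 \<in> verts G \<and> v1 \<in> verts H \<and> v2 \<in> verts H) \<and>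
        ((adj G u1 u2 \<and> v1 = v2) \<or> (u1 = u2 \<and> adj H v1 v2)))"
  by (simp add: adj_def verts_def cart_prod_def)

lemma meas_vertex_K: "meas_vertex (complete_graph n) d E = pfam d {0..<n} E"
  by (simp add: meas_vertex_def pfam_def)
lemma meas_adj_K: "meas_adj (complete_graph n) d E E' = (\<forall>a<n. E a * E' a = 0\<^sub>m d d)"
  by (auto simp: meas_adj_def)

lemma prod_hom:
  assumes f: "quantum_hom_d G (complete_graph n) d1 f" and g: "quantum_hom_d H (complete_graph m) d2 g"
    and k: "n \<le> k" "m \<le> k" "0 < k"
  shows "quantum_hom_d (cart_prod G H) (complete_graph k) (d1*d2) (\<lambda>(u,v). pcomb d1 d2 n m k (f u) (g v))"
proof -
  have fv: "\<And>u. u \<in> verts G \<Longrightarrow> pfam d1 {0..<n} (f u)" using f by (auto simp: quantum_hom_d_def meas_vertex_K)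
  have gv: "\<And>u. u \<in> verts H \<Longrightarrow> pfam d2 {0..<m} (g u)" using g by (auto simp: quantum_hom_d_def meas_vertex_K)
  have fa: "\<And>u u' a. adj G u u' \<Longrightarrow> a < n \<Longrightarrow> f u a * f u' a = 0\<^sub>m d1 d1"
    using f by (auto simp: quantum_hom_d_def meas_adj_K)
  have ga: "\<And>u u' a. adj H u u' \<Longrightarrow> a < m \<Longrightarrow> g u a * g u' a = 0\<^sub>m d2 d2"
    using g by (auto simp: quantum_hom_d_def meas_adj_K)
  show ?thesis
    unfolding quantum_hom_d_def
  proof (intro conjI ballI allI impI)
    fix x assume "x \<in> verts (cart_prod G H)"
    then obtain u v where x: "x = (u,v)" "u \<in> verts G" "v \<in> verts H" by auto
    show "meas_vertex (complete_graph k) (d1*d2) ((\<lambda>(u,v). pcomb d1 d2 n m k (f u) (g v)) x)"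
      unfolding meas_vertex_K x(1) using pcomb_pfam[OF fv[OF x(2)] gv[OF x(3)] k] by simp
  next
    fix x y assume xy: "adj (cart_prod G H) x y"
    obtain u1 v1 u2 v2 where p: "x = (u1,v1)" "y = (u2,v2)" by (cases x, cases y) auto
    have h: "u1 \<in> verts G" "u2 \<in> verts G" "v1 \<in> verts H" "v2 \<in> verts H"
      "(adj G u1 u2 \<and> v1 = v2) \<or> (u1 = u2 \<and> adj H v1 v2)" using xy unfolding p adj_cart by auto
    show "meas_adj (complete_graph k) (d1*d2) ((\<lambda>(u,v). pcomb d1 d2 n m k (f u) (g v)) x)
       ((\<lambda>(u,v). pcomb d1 d2 n m k (f u) (g v)) y)"
      unfolding meas_adj_K p
    proof (intro allI impI)
      fix c assume "c < k"
      from h(5) show "(case (u1,v1) of (u,v) \<Rightarrow> pcomb d1 d2 n m k (f u) (g v)) c *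
        (case (u2,v2) of (u,v) \<Rightarrow> pcomb d1 d2 n m k (f u) (g v)) c = 0\<^sub>m (d1*d2) (d1*d2)"
      proof
        assume a: "adj G u1 u2 \<and> v1 = v2"
        show ?thesis using pcomb_orth_G[OF fv[OF h(1)] fv[OF h(2)] gv[OF h(3)] fa[of u1 u2] k(1)] a by simp
      next
        assume a: "u1 = u2 \<and> adj H v1 v2"
        show ?thesis using pcomb_orth_H[OF fv[OF h(1)] gv[OF h(3)] gv[OF h(4)] ga[of v1 v2] k(2)] a by simp
      qed
    qed
  qed
qed

lemma restrict_G:
  assumes F: "quantum_hom_d (cart_prod G H) K d F" and v0: "v0 \<in> verts H" and G: "is_graph G"
  shows "quantum_hom_d G K d (\<lambda>u. F (u,v0))"
  using F v0 G unfolding quantum_hom_d_def is_graph_def by (auto simp: adj_cart)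

lemma restrict_H:
  assumes F: "quantum_hom_d (cart_prod G H) K d F" and u0: "u0 \<in> verts G" and H: "is_graph H"
  shows "quantum_hom_d H K d (\<lambda>v. F (u0,v))"
  using F u0 H unfolding quantum_hom_d_def is_graph_def by (auto simp: adj_cart)

lemma orth_proj_one: "orth_proj 1 (1\<^sub>m 1)"
  unfolding orth_proj_def by (auto intro!: eq_matI)
lemma orth_proj_zero: "orth_proj 1 (0\<^sub>m 1 1)"
  unfolding orth_proj_def by (auto intro!: eq_matI)

lemma classical_hom:
  assumes G: "is_graph G"
  shows "\<exists>n. quantum_hom G (complete_graph n)"
proof -
  have fin: "finite (verts G)" using G by (simp add: is_graph_def)
  obtain h where h: "bij_betw h (verts G) {0..<card (verts G)}" using ex_bij_betw_finite_nat[OF fin] by blast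
  define N where "N = card (verts G)"
  define f where "f u c = (if c = h u then 1\<^sub>m 1 else 0\<^sub>m 1 1 :: complex mat)" for u c
  have hN: "\<And>u. u \<in> verts G \<Longrightarrow> h u < N" using h unfolding N_def bij_betw_def by auto
  have hinj: "\<And>u u'. u \<in> verts G \<Longrightarrow> u' \<in> verts G \<Longrightarrow> h u = h u' \<Longrightarrow> u = u'"
    using h unfolding bij_betw_def inj_on_def by blast
  have "quantum_hom_d G (complete_graph N) 1 f"
    unfolding quantum_hom_d_def
  proof (intro conjI ballI allI impI)
    fix u assume u: "u \<in> verts G"
    show "meas_vertex (complete_graph N) 1 (f u)"
      unfolding meas_vertex_def
    proof (intro conjI ballI)
      fix c show "orth_proj 1 (f u c)" unfolding f_def using orth_proj_one orth_proj_zero by simp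
    next
      show "mat_sum 1 (verts (complete_graph N)) (f u) = 1\<^sub>m 1"
      proof (rule eq_matI)
        fix i j assume "i < dim_row (1\<^sub>m 1)" "j < dim_col (1\<^sub>m 1)"
        hence ij: "i = 0" "j = 0" by auto
        have "(\<Sum>c\<in>{0..<N}. f u c $$ (0,0)) = (\<Sum>c\<in>{0..<N}. if c = h u then 1 else 0)"
          unfolding f_def by (intro sum.cong) auto
        also have "\<dots> = 1" using hN[OF u] by simp
        finally show "mat_sum 1 (verts (complete_graph N)) (f u) $$ (i,j) = 1\<^sub>m 1 $$ (i,j)" using ij by simp
      qed auto
    qed
  next
    fix u u' assume a: "adj G u u'"
    have uu: "u \<in> verts G" "u' \<in> verts G" "u \<noteq> u'" using a G unfolding is_graph_def by metis+
    have "h u \<noteq> h u'" using hinj uu by blast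
    thus "meas_adj (complete_graph N) 1 (f u) (f u')"
      unfolding meas_adj_K f_def by auto
  qed
  thus ?thesis unfolding quantum_hom_def by auto
qed

lemma hom_pos:
  assumes "quantum_hom G (complete_graph n)" "verts G \<noteq> {}"
  shows "0 < n"
proof (rule ccontr)
  assume "\<not> 0 < n" hence n: "n = 0" by simp
  obtain d f where d: "d \<ge> 1" "quantum_hom_d G (complete_graph n) d f" using assms(1) unfolding quantum_hom_def by blast
  obtain u where u: "u \<in> verts G" using assms(2) by blast
  have "mat_sum d {} (f u) = 1\<^sub>m d" using d(2) u n unfolding quantum_hom_d_def meas_vertex_def by auto
  hence "mat_sum d {} (f u) $$ (0,0) = 1\<^sub>m d $$ (0,0)" by simp
  thus False using d(1) by simp
qed

lemma chi_q_props:
  assumes "is_graph G"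
  shows "quantum_hom G (complete_graph (chi_q G))" "\<And>n. quantum_hom G (complete_graph n) \<Longrightarrow> chi_q G \<le> n"
  using classical_hom[OF assms] unfolding chi_q_def by (auto intro: LeastI_ex Least_le)

theorem theorem7p2:
  fixes G :: "'a graph" and H :: "'b graph"
  assumes "is_graph G" and "is_graph H"
    and "verts G \<noteq> {}" and "verts H \<noteq> {}"
  shows "chi_q (cart_prod G H) = max (chi_q G) (chi_q H)"
proof -
  note cG = chi_q_props[OF assms(1)] and cH = chi_q_props[OF assms(2)]
  obtain d1 f where f: "d1 \<ge> 1" "quantum_hom_d G (complete_graph (chi_q G)) d1 f"
    using cG(1) unfolding quantum_hom_def by blast
  obtain d2 g where g: "d2 \<ge> 1" "quantum_hom_d H (complete_graph (chi_q H)) d2 g"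
    using cH(1) unfolding quantum_hom_def by blast
  have pos: "0 < max (chi_q G) (chi_q H)" using hom_pos[OF cG(1) assms(3)] by simp
  have "quantum_hom_d (cart_prod G H) (complete_graph (max (chi_q G) (chi_q H))) (d1*d2)
     (\<lambda>(u,v). pcomb d1 d2 (chi_q G) (chi_q H) (max (chi_q G) (chi_q H)) (f u) (g v))"
    by (rule prod_hom[OF f(2) g(2)]) (use pos in auto)
  moreover have "d1*d2 \<ge> 1" using f(1) g(1) by simp
  ultimately have hp: "quantum_hom (cart_prod G H) (complete_graph (max (chi_q G) (chi_q H)))"
    unfolding quantum_hom_def by blast
  have le1: "chi_q (cart_prod G H) \<le> max (chi_q G) (chi_q H)"
    using hp unfolding chi_q_def by (rule Least_le)
  have hc: "quantum_hom (cart_prod G H) (complete_graph (chi_q (cart_prod G H)))"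
    using hp unfolding chi_q_def by (rule LeastI)
  then obtain d F where F: "d \<ge> 1" "quantum_hom_d (cart_prod G H) (complete_graph (chi_q (cart_prod G H))) d F"
    unfolding quantum_hom_def by blast
  obtain u0 where u0: "u0 \<in> verts G" using assms(3) by blast
  obtain v0 where v0: "v0 \<in> verts H" using assms(4) by blast
  have "quantum_hom G (complete_graph (chi_q (cart_prod G H)))"
    using restrict_G[OF F(2) v0 assms(1)] F(1) unfolding quantum_hom_def by blast
  hence "chi_q G \<le> chi_q (cart_prod G H)" by (rule cG(2))
  moreover have "quantum_hom H (complete_graph (chi_q (cart_prod G H)))"
    using restrict_H[OF F(2) u0 assms(2)] F(1) unfolding quantum_hom_def by blast
  hence "chi_q H \<le> chi_q (cart_prod G H)" by (rule cH(2))
  ultimately show ?thesis using le1 by simp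
qed


end
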